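(* Let $(X,p_X)$ be a non-empty partial metric space. Then there exists a partial metric space $(Y,p_Y)$ with $X\subseteq Y$ and $p_Y$ restricting to $p_X$ on $X\times X$, such that $X$ is dense in $Y$ but $X$ is not symmetrically dense in $Y$.
   Context: A partial metric on a set $X$ is a function $p_X\colon X\times X\to\mathbb{R}_{\geq0}$ such that for all $x,y,z\in X$: (P1) $p_X(x,x)=p_X(x,y)=p_X(y,y)$ implies $x=y$; (P2) $p_X(x,x)\leq p_X(x,y)$; (P3) $p_X(x,y)=p_X(y,x)$; (P4) $p_X(x,z)+p_X(y,y)\leq p_X(x,y)+p_X(y,z)$. For $x\in X$ and $\varepsilon>0$, the open ball is $B_\varepsilon(x)=\{y\in X: p_X(x,y)<p_X(x,x)+\varepsilon\}$. A subset $A\subseteq X$ is dense in $X$ if for every $x\in X$ and every $\varepsilon>0$ there is $y\in A$ with $y\in B_\varepsilon(x)$. It is symmetrically dense in $X$ if for every $x\in X$ and every $\varepsilon>0$ there is $y\in A$ with $x\in B_\varepsilon(y)$ and $y\in B_\varepsilon(x)$. *)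

theory Defs
  imports Complex_Main
begin

definition partial_metric_on :: "'a set \<Rightarrow> ('a \<Rightarrow> 'a \<Rightarrow> real) \<Rightarrow> bool" where
  "partial_metric_on X p \<longleftrightarrow>
     (\<forall>x\<in>X. \<forall>y\<in>X. p x y \<ge> 0) \<and>
     (\<forall>x\<in>X. \<forall>y\<in>X. p x x = p x y \<and> p x y = p y y \<longrightarrow> x = y) \<and>
     (\<forall>x\<in>X. \<forall>y\<in>X. p x x \<le> p x y) \<and>
     (\<forall>x\<in>X. \<forall>y\<in>X. p x y = p y x) \<and>
     (\<forall>x\<in>X. \<forall>y\<in>X. \<forall>z\<in>X. p x z + p y y \<le> p x y + p y z)"

definition pball :: "'a set \<Rightarrow> ('a \<Rightarrow> 'a \<Rightarrow> real) \<Rightarrow> 'a \<Rightarrow> real \<Rightarrow> 'a set" where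
  "pball X p x e = {y\<in>X. p x y < p x x + e}"

definition pdense_in :: "'a set \<Rightarrow> 'a set \<Rightarrow> ('a \<Rightarrow> 'a \<Rightarrow> real) \<Rightarrow> bool" where
  "pdense_in A X p \<longleftrightarrow> (\<forall>x\<in>X. \<forall>e>0. \<exists>y\<in>A. y \<in> pball X p x e)"

definition psym_dense_in :: "'a set \<Rightarrow> 'a set \<Rightarrow> ('a \<Rightarrow> 'a \<Rightarrow> real) \<Rightarrow> bool" where
  "psym_dense_in A X p \<longleftrightarrow>
     (\<forall>x\<in>X. \<forall>e>0. \<exists>y\<in>A. x \<in> pball X p y e \<and> y \<in> pball X p x e)"

end

theory Submission
  imports Defs
begin

theorem lemma1p3:
  fixes X :: "'a set" and pX :: "'a \<Rightarrow> 'a \<Rightarrow> real"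
  assumes "partial_metric_on X pX" and "X \<noteq> {}"
  shows "\<exists>(Y :: 'a option set) (pY :: 'a option \<Rightarrow> 'a option \<Rightarrow> real).
           partial_metric_on Y pY \<and> Some ` X \<subseteq> Y \<and>
           (\<forall>x\<in>X. \<forall>y\<in>X. pY (Some x) (Some y) = pX x y) \<and>
           pdense_in (Some ` X) Y pY \<and> \<not> psym_dense_in (Some ` X) Y pY"
proof -
  obtain x0 where x0: "x0 \<in> X" using assms(2) by blast
  note pm = assms(1)[unfolded partial_metric_on_def]
  have nn: "\<And>x y. x \<in> X \<Longrightarrow> y \<in> X \<Longrightarrow> pX x y \<ge> 0" using pm by blast
  have p1: "\<And>x y. x \<in> X \<Longrightarrow> y \<in> X \<Longrightarrow> pX x x = pX x y \<Longrightarrow> pX x y = pX y y \<Longrightarrow> x = y" using pm by blast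
  have p2: "\<And>x y. x \<in> X \<Longrightarrow> y \<in> X \<Longrightarrow> pX x x \<le> pX x y" using pm by blast
  have p3: "\<And>x y. x \<in> X \<Longrightarrow> y \<in> X \<Longrightarrow> pX x y = pX y x" using pm by blast
  have p4: "\<And>x y z. x \<in> X \<Longrightarrow> y \<in> X \<Longrightarrow> z \<in> X \<Longrightarrow> pX x z + pX y y \<le> pX x y + pX y z" using pm by blast
  define pY where "pY u v = (case (u,v) of (Some x, Some y) \<Rightarrow> pX x y
     | (None, None) \<Rightarrow> pX x0 x0 + 1 | (None, Some y) \<Rightarrow> pX x0 y + 1
     | (Some x, None) \<Rightarrow> pX x0 x + 1)" for u v
  have [simp]: "pY (Some x) (Some y) = pX x y" "pY None None = pX x0 x0 + 1"
    "pY None (Some y) = pX x0 y + 1" "pY (Some y) None = pX x0 y + 1" for x y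
    by (simp_all add: pY_def)
  define Y where "Y = insert None (Some ` X)"
  have "partial_metric_on Y pY"
    unfolding partial_metric_on_def Y_def
  proof (intro conjI)
    show "\<forall>x\<in>insert None (Some ` X). \<forall>y\<in>insert None (Some ` X). 0 \<le> pY x y"
      using nn x0 by (auto simp: add_nonneg_nonneg)
    show "\<forall>x\<in>insert None (Some ` X). \<forall>y\<in>insert None (Some ` X). pY x x = pY x y \<and> pY x y = pY y y \<longrightarrow> x = y"
      using p1 p2 p3 x0 by (auto) (metis p2 x0 less_add_one not_le)+
    show "\<forall>x\<in>insert None (Some ` X). \<forall>y\<in>insert None (Some ` X). pY x x \<le> pY x y"
      using p2 p3 x0 by (auto) (smt (verit) p2 p3 p4 x0)+
    show "\<forall>x\<in>insert None (Some ` X). \<forall>y\<in>insert None (Some ` X). pY x y = pY y x"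
      using p3 by auto
    show "\<forall>x\<in>insert None (Some ` X). \<forall>y\<in>insert None (Some ` X). \<forall>z\<in>insert None (Some ` X). pY x z + pY y y \<le> pY x y + pY y z"
    proof (intro ballI)
      fix x y z assume "x \<in> insert None (Some ` X)" "y \<in> insert None (Some ` X)" "z \<in> insert None (Some ` X)"
      then show "pY x z + pY y y \<le> pY x y + pY y z"
        apply (auto)
        using p2 p3 p4 x0 by (smt (verit))+
    qed
  qed
  moreover have "pdense_in (Some ` X) Y pY"
    unfolding pdense_in_def pball_def Y_def
    using x0 by auto (metis less_add_same_cancel1)+
  moreover have "\<not> psym_dense_in (Some ` X) Y pY"
    unfolding psym_dense_in_def pball_def Y_def
    apply (auto intro!: bexI[of _ None] exI[of _ 1])
    using p2 p3 x0 by (smt (verit))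
  moreover have "Some ` X \<subseteq> Y" by (auto simp: Y_def)
  moreover have "\<forall>x\<in>X. \<forall>y\<in>X. pY (Some x) (Some y) = pX x y" by simp
  ultimately show ?thesis by blast
qed

end
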